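(* Let $\vec{\mathcal G}=([n],E)$ be a directed graph with $m=|E|$ edges in which every vertex has at least one outgoing edge and which has a single strongly connected component. Let the weights $(r_{ij})$ be independent absolutely continuous random variables with densities $f_{ij}$ satisfying $f_{ij}(y)\le\phi$ for all $(i,j),y$, for some $\phi>0$. Let $\delta=1/(3n^2m\phi)$. Then $$\mathbb P\bigl(\exists \text{ a cycle } C:\ B_\infty(r,\delta)\subseteq\mathcal P^{C}\bigr)\ge 1-\frac1n,$$ where $B_\infty(r,\delta)=\{\tilde r\in\mathbb R^m:\|r-\tilde r\|_\infty\le\delta\}$.
   Context: The mean weight of a directed cycle is the sum of its edge weights divided by its number of edges. For a directed cycle $C$, $\mathcal P^{C}$ is the set of $r\in\mathbb R^m$ such that $C$ is the unique cycle of minimum mean weight in $\vec{\mathcal G}$ with weights $r$. *)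

theory Defs
  imports "HOL-Probability.Probability"
begin

text \<open>A directed cycle is identified with its (nonempty) set of edges, given by a
  nonempty list of distinct vertices v_0,...,v_{k-1} with edges (v_i, v_{(i+1) mod k}).\<close>

definition is_dcycle :: "(nat \<times> nat) set \<Rightarrow> (nat \<times> nat) set \<Rightarrow> bool" where
  "is_dcycle E C \<longleftrightarrow> (\<exists>vs. vs \<noteq> [] \<and> distinct vs \<and>
      C = {(vs ! i, vs ! ((i + 1) mod length vs)) | i. i < length vs} \<and> C \<subseteq> E)"

definition mean_weight :: "(nat \<times> nat \<Rightarrow> real) \<Rightarrow> (nat \<times> nat) set \<Rightarrow> real" where
  "mean_weight r C = (\<Sum>e\<in>C. r e) / real (card C)"

definition unique_min_region :: "(nat \<times> nat) set \<Rightarrow> (nat \<times> nat) set \<Rightarrow> (nat \<times> nat \<Rightarrow> real) set" where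
  "unique_min_region E C = {r. is_dcycle E C \<and>
      (\<forall>C'. is_dcycle E C' \<and> C' \<noteq> C \<longrightarrow> mean_weight r C < mean_weight r C')}"

text \<open>Closed sup-norm ball in R^E (coordinates outside E are unconstrained; they do not
  influence mean weights of cycles in E).\<close>
definition ball_inf :: "(nat \<times> nat) set \<Rightarrow> (nat \<times> nat \<Rightarrow> real) \<Rightarrow> real \<Rightarrow> (nat \<times> nat \<Rightarrow> real) set" where
  "ball_inf E r d = {r'. \<forall>e\<in>E. \<bar>r e - r' e\<bar> \<le> d}"

end

theory Submission
  imports Defs
begin


lemma dcycle_basic:
  assumes "is_dcycle E C" "E \<subseteq> {0..<n} \<times> {0..<n}"
  shows "C \<noteq> {}" "C \<subseteq> E" "finite C" "card C \<le> n"
proof -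
  obtain vs where vs: "vs \<noteq> []" "distinct vs"
    "C = {(vs ! i, vs ! ((i + 1) mod length vs)) | i. i < length vs}" "C \<subseteq> E"
    using assms(1) unfolding is_dcycle_def by blast
  have Cim: "C = (\<lambda>i. (vs ! i, vs ! ((i + 1) mod length vs))) ` {0..<length vs}"
    using vs(3) by auto
  show "C \<noteq> {}" using vs(1) Cim by auto
  show "C \<subseteq> E" by fact
  show "finite C" using Cim by simp
  have "set vs \<subseteq> {0..<n}"
  proof
    fix v assume "v \<in> set vs"
    then obtain i where i: "i < length vs" "v = vs ! i" by (auto simp: in_set_conv_nth)
    then have "(v, vs ! ((i + 1) mod length vs)) \<in> E" using vs(3,4) by blast
    then show "v \<in> {0..<n}" using assms(2) by blast
  qed
  then have "length vs \<le> n" using distinct_card[OF vs(2)] card_mono[of "{0..<n}" "set vs"] by simp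
  moreover have "card C \<le> length vs" using Cim card_image_le[of "{0..<length vs}"] by simp
  ultimately show "card C \<le> n" by simp
qed

lemma dcycle_nonnest:
  assumes "is_dcycle E C1" "is_dcycle E C2" "C1 \<subseteq> C2"
  shows "C1 = C2"
proof -
  obtain us where us: "us \<noteq> []" "distinct us"
    "C1 = {(us ! i, us ! ((i + 1) mod length us)) | i. i < length us}"
    using assms(1) unfolding is_dcycle_def by blast
  obtain vs where vs: "vs \<noteq> []" "distinct vs"
    "C2 = {(vs ! i, vs ! ((i + 1) mod length vs)) | i. i < length vs}"
    using assms(2) unfolding is_dcycle_def by blast
  define k where "k = length vs"
  define l where "l = length us"
  have kpos: "k > 0" using vs(1) k_def by simp
  have lpos: "l > 0" using us(1) l_def by simp
  have uniq: "b = b'" if ab1: "(a, b) \<in> C2" and ab2: "(a, b') \<in> C2" for a b b'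
  proof -
    obtain i where i: "i < k" "a = vs ! i" "b = vs ! ((i + 1) mod k)" using ab1 vs(3) k_def by auto
    obtain j where j: "j < k" "a = vs ! j" "b' = vs ! ((j + 1) mod k)" using ab2 vs(3) k_def by auto
    have "i = j" using i j vs(2) k_def nth_eq_iff_index_eq by metis
    then show ?thesis using i j by simp
  qed
  have edge2: "(vs ! (j mod k), vs ! (Suc j mod k)) \<in> C2" for j
  proof -
    have "j mod k < k" using kpos by simp
    moreover have "(j mod k + 1) mod k = Suc j mod k" by (simp add: mod_Suc_eq)
    ultimately show ?thesis using vs(3) k_def by fastforce
  qed
  have edge1: "i < l \<Longrightarrow> (us ! i, us ! ((i + 1) mod l)) \<in> C2" for i
    using assms(3) us(3) l_def by blast
  have "(us ! 0, us ! ((0 + 1) mod l)) \<in> C2" using edge1 lpos by blast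
  then obtain j0 where j0: "j0 < k" "us ! 0 = vs ! j0" using vs(3) k_def by auto
  have inus: "vs ! ((j0 + t) mod k) \<in> set us" for t
  proof (induction t)
    case 0
    have "vs ! ((j0 + 0) mod k) = us ! 0" using j0 by simp
    then show ?case using lpos l_def by (simp add: nth_mem)
  next
    case (Suc t)
    then obtain i where i: "i < l" "vs ! ((j0 + t) mod k) = us ! i" using l_def by (auto simp: in_set_conv_nth)
    have "(vs ! ((j0 + t) mod k), us ! ((i + 1) mod l)) \<in> C2" using edge1[OF i(1)] i(2) by simp
    moreover have "(vs ! ((j0 + t) mod k), vs ! (Suc (j0 + t) mod k)) \<in> C2" using edge2 by blast
    ultimately have "vs ! (Suc (j0 + t) mod k) = us ! ((i + 1) mod l)" using uniq by blast
    moreover have "(i + 1) mod l < length us" using lpos l_def by simp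
    ultimately show ?case by (simp add: nth_mem)
  qed
  have allin: "j < k \<Longrightarrow> vs ! j \<in> set us" for j
  proof -
    assume "j < k"
    have "(j0 + (k - j0 + j)) mod k = j" using j0(1) \<open>j < k\<close> by simp
    then show ?thesis using inus[of "k - j0 + j"] by simp
  qed
  have "C2 \<subseteq> C1"
  proof
    fix p assume "p \<in> C2"
    then obtain j where j: "j < k" "p = (vs ! j, vs ! ((j + 1) mod k))" using vs(3) k_def by auto
    obtain i where i: "i < l" "vs ! j = us ! i" using allin[OF j(1)] l_def by (auto simp: in_set_conv_nth)
    have "(vs ! j, us ! ((i + 1) mod l)) \<in> C2" using edge1[OF i(1)] i(2) by simp
    with \<open>p \<in> C2\<close> j(2) have "p = (us ! i, us ! ((i + 1) mod l))" using uniq i(2) by auto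
    then show "p \<in> C1" using us(3) i(1) l_def by blast
  qed
  then show ?thesis using assms(3) by blast
qed

lemma dcycle_exists:
  assumes "n \<ge> 1" "E \<subseteq> {0..<n} \<times> {0..<n}" "\<forall>i\<in>{0..<n}. \<exists>j. (i, j) \<in> E"
  shows "\<exists>C. is_dcycle E C"
proof -
  obtain s where s: "\<forall>i\<in>{0..<n}. (i, s i) \<in> E" using bchoice[OF assms(3)] by blast
  have slt: "i < n \<Longrightarrow> s i < n" for i using s assms(2) by fastforce
  have orb: "(s ^^ t) 0 < n" for t
    by (induction t) (use assms(1) slt in auto)
  have "\<not> inj_on (\<lambda>t. (s ^^ t) 0) {0..n}"
  proof
    assume "inj_on (\<lambda>t. (s ^^ t) 0) {0..n}"
    moreover have "(\<lambda>t. (s ^^ t) 0) ` {0..n} \<subseteq> {0..<n}" using orb by auto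
    ultimately have "card {0..n} \<le> card {0..<n}" using card_inj_on_le[of _ "{0..n}" "{0..<n}"] by simp
    then show False by simp
  qed
  then obtain a b where ab: "a \<in> {0..n}" "b \<in> {0..n}" "a \<noteq> b" "(s ^^ a) 0 = (s ^^ b) 0"
    unfolding inj_on_def by blast
  define p where "p = (s ^^ min a b) 0"
  define d where "d = max a b - min a b"
  have "(s ^^ d) p = p"
  proof -
    have "(s ^^ d) p = (s ^^ (d + min a b)) 0" unfolding p_def by (simp add: funpow_add)
    also have "d + min a b = max a b" unfolding d_def by simp
    also have "(s ^^ max a b) 0 = p" unfolding p_def using ab(4) by (cases "a \<le> b") (auto simp: max_def min_def)
    finally show ?thesis .
  qed
  moreover have "d > 0" unfolding d_def using ab(3) by simp
  ultimately have ex: "\<exists>d. d > 0 \<and> (s ^^ d) p = p" by blast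
  define k where "k = (LEAST d. d > 0 \<and> (s ^^ d) p = p)"
  have k: "k > 0" "(s ^^ k) p = p" using LeastI_ex[OF ex] unfolding k_def by auto
  have kmin: "\<And>d. 0 < d \<Longrightarrow> d < k \<Longrightarrow> (s ^^ d) p \<noteq> p"
    unfolding k_def using not_less_Least by blast
  have pn: "(s ^^ t) p < n" for t proof -
    have "(s ^^ t) p = (s ^^ (t + min a b)) 0" unfolding p_def by (simp add: funpow_add)
    then show ?thesis using orb by simp
  qed
  define vs where "vs = map (\<lambda>t. (s ^^ t) p) [0..<k]"
  have len: "length vs = k" unfolding vs_def by simp
  have dist: "distinct vs"
    unfolding distinct_conv_nth len
  proof (intro allI impI)
    fix i j assume ij: "i < k" "j < k" "i \<noteq> j"
    show "vs ! i \<noteq> vs ! j"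
    proof
      assume eq: "vs ! i = vs ! j"
      have gen: "False" if "i' < j'" "j' < k" "(s ^^ i') p = (s ^^ j') p" for i' j'
      proof -
        have "(s ^^ (k - j' + i')) p = (s ^^ (k - j')) ((s ^^ i') p)" by (simp add: funpow_add)
        also have "\<dots> = (s ^^ (k - j')) ((s ^^ j') p)" using that(3) by simp
        also have "\<dots> = (s ^^ (k - j' + j')) p" by (simp add: funpow_add)
        also have "\<dots> = (s ^^ k) p" using that by simp
        finally have "(s ^^ (k - j' + i')) p = p" using k(2) by simp
        moreover have "0 < k - j' + i'" "k - j' + i' < k" using that by auto
        ultimately show False using kmin[of "k - j' + i'"] by simp
      qed
      have "(s ^^ i) p = (s ^^ j) p" using eq ij unfolding vs_def by simp
      show False
      proof (cases "i < j")
        case True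
        then show False using gen[of i j] ij \<open>(s ^^ i) p = (s ^^ j) p\<close> by simp
      next
        case False
        then have "j < i" using ij by simp
        then show False using gen[of j i] ij \<open>(s ^^ i) p = (s ^^ j) p\<close> by simp
      qed
    qed
  qed
  define C where "C = {(vs ! i, vs ! ((i + 1) mod length vs)) | i. i < length vs}"
  have "C \<subseteq> E"
  proof
    fix e assume "e \<in> C"
    then obtain i where i: "i < k" "e = (vs ! i, vs ! ((i + 1) mod k))" unfolding C_def len by auto
    have "vs ! ((i + 1) mod k) = s ((s ^^ i) p)"
    proof (cases "i + 1 < k")
      case True
      then show ?thesis unfolding vs_def by simp
    next
      case False
      then have "i + 1 = k" using i by simp
      then have "(i + 1) mod k = 0" by simp
      moreover have "s ((s ^^ i) p) = p"
      proof -
        have "s ((s ^^ i) p) = (s ^^ (Suc i)) p" by simp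
        also have "Suc i = k" using \<open>i + 1 = k\<close> by simp
        finally show ?thesis using k(2) by simp
      qed
      ultimately show ?thesis unfolding vs_def using k(1) by simp
    qed
    then have "e = ((s ^^ i) p, s ((s ^^ i) p))" using i unfolding vs_def by simp
    then show "e \<in> E" using s pn by auto
  qed
  moreover have "vs \<noteq> []" using len k(1) by auto
  ultimately have "is_dcycle E C" unfolding is_dcycle_def C_def using dist by blast
  then show ?thesis by blast
qed




lemma mean_cong: "(\<And>x. x \<in> C \<Longrightarrow> r x = r' x) \<Longrightarrow> mean_weight r C = mean_weight r' C"
  unfolding mean_weight_def by (simp cong: sum.cong)

lemma mean_upd_notin: "e \<notin> C \<Longrightarrow> mean_weight (r(e:=y)) C = mean_weight (r(e:=x)) C"
  by (rule mean_cong) auto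

lemma mean_upd_diff:
  assumes "finite D" "e \<in> D"
  shows "mean_weight (r(e:=y)) D - mean_weight (r(e:=x)) D = (y - x) / real (card D)"
proof -
  have eq: "(\<Sum>a\<in>D-{e}. (r(e:=z)) a) = (\<Sum>a\<in>D-{e}. r a)" for z
    by (rule sum.cong) auto
  have "(\<Sum>a\<in>D. (r(e:=y)) a) = y + (\<Sum>a\<in>D-{e}. r a)"
    using assms eq[of y] by (simp add: sum.remove)
  moreover have "(\<Sum>a\<in>D. (r(e:=x)) a) = x + (\<Sum>a\<in>D-{e}. r a)"
    using assms eq[of x] by (simp add: sum.remove)
  ultimately show ?thesis unfolding mean_weight_def by (simp add: diff_divide_distrib add_divide_distrib)
qed

lemma mean_ball:
  assumes "finite C" "C \<noteq> {}" "C \<subseteq> E" "r' \<in> ball_inf E r d"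
  shows "\<bar>mean_weight r' C - mean_weight r C\<bar> \<le> d"
proof -
  have cpos: "real (card C) > 0" using assms(1,2) by (simp add: card_gt_0_iff)
  have "\<bar>(\<Sum>a\<in>C. r' a) - (\<Sum>a\<in>C. r a)\<bar> = \<bar>\<Sum>a\<in>C. r' a - r a\<bar>" by (simp add: sum_subtractf)
  also have "\<dots> \<le> (\<Sum>a\<in>C. \<bar>r' a - r a\<bar>)" by (rule sum_abs)
  also have "\<dots> \<le> (\<Sum>a\<in>C. d)" 
    using assms(3,4) unfolding ball_inf_def by (intro sum_mono) (auto simp: abs_minus_commute)
  also have "\<dots> = real (card C) * d" by simp
  finally have "\<bar>(\<Sum>a\<in>C. r' a) - (\<Sum>a\<in>C. r a)\<bar> \<le> real (card C) * d" .
  moreover have "mean_weight r' C - mean_weight r C = ((\<Sum>a\<in>C. r' a) - (\<Sum>a\<in>C. r a)) / real (card C)"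
    unfolding mean_weight_def by (simp add: diff_divide_distrib)
  ultimately show ?thesis using cpos by (simp add: abs_divide pos_divide_le_eq mult.commute)
qed

lemma diam_emeasure:
  fixes S :: "real set"
  assumes diam: "\<And>x y. x \<in> S \<Longrightarrow> y \<in> S \<Longrightarrow> y - x \<le> L" and L: "L \<ge> 0"
  shows "emeasure lborel S \<le> ennreal L"
proof (cases "S = {}")
  case True then show ?thesis by simp
next
  case False
  then obtain y0 where y0: "y0 \<in> S" by blast
  have bdd: "bdd_below S" unfolding bdd_below_def using diam[OF _ y0] by (metis diff_le_eq add.commute)
  have "S \<subseteq> {Inf S .. Inf S + L}"
  proof
    fix y assume y: "y \<in> S"
    have i1: "Inf S \<le> y" using cInf_lower[OF y bdd] .
    have lb: "y - L \<le> x" if "x \<in> S" for x using diam[OF that y] by linarith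
    have "y - L \<le> Inf S" using False lb by (intro cInf_greatest) auto
    with i1 show "y \<in> {Inf S .. Inf S + L}" by simp
  qed
  then have "emeasure lborel S \<le> emeasure lborel {Inf S .. Inf S + L}" by (intro emeasure_mono) auto
  also have "\<dots> = ennreal L" using L by simp
  finally show ?thesis .
qed

definition coef :: "(nat \<times> nat) set \<Rightarrow> (nat \<times> nat) set \<Rightarrow> nat \<times> nat \<Rightarrow> real" where
  "coef C1 C2 e = (if e \<in> C2 then 1 / real (card C2) else 0) - (if e \<in> C1 then 1 / real (card C1) else 0)"

lemma mean_as_sum:
  assumes "finite E" "C \<subseteq> E"
  shows "mean_weight r C = (\<Sum>e\<in>E. (if e \<in> C then 1 / real (card C) else 0) * r e)"
proof -
  have "(\<Sum>e\<in>E. (if e \<in> C then 1 / real (card C) else 0) * r e) = (\<Sum>e\<in>E. if e \<in> C then r e / real (card C) else 0)"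
    by (intro sum.cong) auto
  also have "\<dots> = (\<Sum>e\<in>E \<inter> C. r e / real (card C))" using assms(1) by (simp add: sum.inter_restrict)
  also have "E \<inter> C = C" using assms(2) by blast
  finally show ?thesis unfolding mean_weight_def by (simp add: sum_divide_distrib)
qed

lemma mean_diff_coef:
  assumes "finite E" "C1 \<subseteq> E" "C2 \<subseteq> E"
  shows "mean_weight r C2 - mean_weight r C1 = (\<Sum>e\<in>E. coef C1 C2 e * r e)"
  unfolding coef_def mean_as_sum[OF assms(1,2)] mean_as_sum[OF assms(1,3)]
  by (simp add: sum_subtractf[symmetric] left_diff_distrib)

lemma ball_char:
  assumes "finite E" "d \<ge> 0" and cyc: "\<And>C. is_dcycle E C \<Longrightarrow> C \<subseteq> E"
  shows "ball_inf E r d \<subseteq> unique_min_region E C1 \<longleftrightarrow>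
    is_dcycle E C1 \<and> (\<forall>C2. is_dcycle E C2 \<and> C2 \<noteq> C1 \<longrightarrow>
       d * (\<Sum>e\<in>E. \<bar>coef C1 C2 e\<bar>) < (\<Sum>e\<in>E. coef C1 C2 e * r e))"
proof
  assume H: "ball_inf E r d \<subseteq> unique_min_region E C1"
  have rin: "r \<in> ball_inf E r d" unfolding ball_inf_def using assms(2) by simp
  then have c1: "is_dcycle E C1" using H unfolding unique_min_region_def by blast
  show "is_dcycle E C1 \<and> (\<forall>C2. is_dcycle E C2 \<and> C2 \<noteq> C1 \<longrightarrow>
       d * (\<Sum>e\<in>E. \<bar>coef C1 C2 e\<bar>) < (\<Sum>e\<in>E. coef C1 C2 e * r e))"
  proof (intro conjI allI impI c1)
    fix C2 assume C2: "is_dcycle E C2 \<and> C2 \<noteq> C1"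
    define r' where "r' = (\<lambda>e. r e - d * sgn (coef C1 C2 e))"
    have "r' \<in> ball_inf E r d" unfolding ball_inf_def r'_def using assms(2)
      by (auto simp: abs_mult sgn_if)
    then have "mean_weight r' C1 < mean_weight r' C2" using H C2 unfolding unique_min_region_def by blast
    then have "0 < (\<Sum>e\<in>E. coef C1 C2 e * r' e)"
      using mean_diff_coef[OF assms(1) cyc[OF c1] cyc, of C2 r'] C2 by simp
    also have "(\<Sum>e\<in>E. coef C1 C2 e * r' e) = (\<Sum>e\<in>E. coef C1 C2 e * r e) - d * (\<Sum>e\<in>E. \<bar>coef C1 C2 e\<bar>)"
    proof -
      have "coef C1 C2 e * r' e = coef C1 C2 e * r e - d * \<bar>coef C1 C2 e\<bar>" for e
        unfolding r'_def by (simp add: sgn_if algebra_simps)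
      then show ?thesis by (simp add: sum_subtractf sum_distrib_left)
    qed
    finally show "d * (\<Sum>e\<in>E. \<bar>coef C1 C2 e\<bar>) < (\<Sum>e\<in>E. coef C1 C2 e * r e)" by simp
  qed
next
  assume H: "is_dcycle E C1 \<and> (\<forall>C2. is_dcycle E C2 \<and> C2 \<noteq> C1 \<longrightarrow>
       d * (\<Sum>e\<in>E. \<bar>coef C1 C2 e\<bar>) < (\<Sum>e\<in>E. coef C1 C2 e * r e))"
  show "ball_inf E r d \<subseteq> unique_min_region E C1"
  proof
    fix r' assume r': "r' \<in> ball_inf E r d"
    have "\<forall>C2. is_dcycle E C2 \<and> C2 \<noteq> C1 \<longrightarrow> mean_weight r' C1 < mean_weight r' C2"
    proof (intro allI impI)
      fix C2 assume C2: "is_dcycle E C2 \<and> C2 \<noteq> C1"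
      have le: "coef C1 C2 e * r e - d * \<bar>coef C1 C2 e\<bar> \<le> coef C1 C2 e * r' e" if "e \<in> E" for e
      proof -
        have "\<bar>r' e - r e\<bar> \<le> d" using r' that unfolding ball_inf_def by (simp add: abs_minus_commute)
        then have "\<bar>coef C1 C2 e * (r' e - r e)\<bar> \<le> \<bar>coef C1 C2 e\<bar> * d"
          by (simp add: abs_mult mult_left_mono)
        then show ?thesis by (simp add: algebra_simps abs_le_iff)
      qed
      have "0 < (\<Sum>e\<in>E. coef C1 C2 e * r e) - d * (\<Sum>e\<in>E. \<bar>coef C1 C2 e\<bar>)" using H C2 by simp
      also have "\<dots> = (\<Sum>e\<in>E. coef C1 C2 e * r e - d * \<bar>coef C1 C2 e\<bar>)"
        by (simp add: sum_subtractf sum_distrib_left)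
      also have "\<dots> \<le> (\<Sum>e\<in>E. coef C1 C2 e * r' e)" using le by (intro sum_mono) auto
      also have "\<dots> = mean_weight r' C2 - mean_weight r' C1"
        using mean_diff_coef[OF assms(1) cyc cyc, of C1 C2 r'] H C2 by simp
      finally show "mean_weight r' C1 < mean_weight r' C2" by simp
    qed
    then show "r' \<in> unique_min_region E C1" using H unfolding unique_min_region_def by blast
  qed
qed




lemma (in prob_space) prob_bound:
  fixes X :: "'i \<Rightarrow> 'a \<Rightarrow> real" and g :: "real \<Rightarrow> ennreal"
    and Q :: "('i \<Rightarrow> real) \<Rightarrow> real \<Rightarrow> bool"
  assumes ind: "indep_vars (\<lambda>_. borel) X I" and e: "e \<in> I"
    and dist: "distributed M lborel (X e) g" and gb: "\<And>y. g y \<le> ennreal \<phi>" and phi: "\<phi> \<ge> 0" and L: "L \<ge> 0"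
    and Qm: "Measurable.pred (PiM (I - {e}) (\<lambda>_. borel) \<Otimes>\<^sub>M borel) (\<lambda>p. Q (fst p) (snd p))"
    and diam: "\<And>y x x'. Q y x \<Longrightarrow> Q y x' \<Longrightarrow> x' - x \<le> L"
  shows "{\<omega> \<in> space M. Q (restrict (\<lambda>i. X i \<omega>) (I - {e})) (X e \<omega>)} \<in> events"
    and "emeasure M {\<omega> \<in> space M. Q (restrict (\<lambda>i. X i \<omega>) (I - {e})) (X e \<omega>)} \<le> ennreal (\<phi> * L)"
proof -
  define T where "T = PiM (I - {e}) (\<lambda>_. borel :: real measure)"
  define U where "U = PiM {e} (\<lambda>_. borel :: real measure)"
  define Y where "Y = (\<lambda>\<omega>. restrict (\<lambda>i. X i \<omega>) (I - {e}))"
  define Z where "Z = (\<lambda>\<omega>. restrict (\<lambda>i. X i \<omega>) {e})"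
  have iv: "indep_var T Y U Z"
    unfolding T_def Y_def U_def Z_def using e by (intro indep_var_restrict[OF ind]) auto
  then have eq: "distr M T Y \<Otimes>\<^sub>M distr M U Z = distr M (T \<Otimes>\<^sub>M U) (\<lambda>x. (Y x, Z x))"
    and rvY: "random_variable T Y" and rvZ: "random_variable U Z"
    unfolding indep_var_distribution_eq by auto
  have rvX: "X e \<in> borel_measurable M" using dist by (simp add: distributed_def)
  have embm: "(\<lambda>x. \<lambda>i\<in>{e}. x) \<in> measurable borel U" unfolding U_def by measurable
  have Qm': "Measurable.pred (T \<Otimes>\<^sub>M U) (\<lambda>p. Q (fst p) (snd p e))"
  proof -
    have "(\<lambda>p. (fst p, snd p e)) \<in> measurable (T \<Otimes>\<^sub>M U) (T \<Otimes>\<^sub>M borel)"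
      unfolding U_def by measurable
    from measurable_compose[OF this Qm[folded T_def]] show ?thesis by (simp add: o_def)
  qed
  define G where "G = {p \<in> space (T \<Otimes>\<^sub>M U). Q (fst p) (snd p e)}"
  have G: "G \<in> sets (T \<Otimes>\<^sub>M U)" unfolding G_def using Qm' by measurable
  have meas: "(\<lambda>x. (Y x, Z x)) \<in> measurable M (T \<Otimes>\<^sub>M U)" using rvY rvZ by measurable
  have Ze: "Z \<omega> e = X e \<omega>" for \<omega> unfolding Z_def by simp
  have seteq: "{\<omega> \<in> space M. Q (Y \<omega>) (X e \<omega>)} = (\<lambda>x. (Y x, Z x)) -` G \<inter> space M"
    unfolding G_def using meas by (auto simp: measurable_def Ze)
  show "{\<omega> \<in> space M. Q (restrict (\<lambda>i. X i \<omega>) (I - {e})) (X e \<omega>)} \<in> events"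
  proof -
    have "(\<lambda>x. (Y x, Z x)) -` G \<inter> space M \<in> events" using meas G by (rule measurable_sets)
    with seteq show ?thesis unfolding Y_def by simp
  qed
  interpret PZ: prob_space "distr M U Z" using rvZ by (rule prob_space_distr)
  interpret PY: prob_space "distr M T Y" using rvY by (rule prob_space_distr)
  have sec: "emeasure (distr M U Z) (Pair y -` G) \<le> ennreal (\<phi> * L)" for y
  proof -
    have A: "Pair y -` G \<in> sets U" using G by (rule sets_Pair1)
    define B where "B = (\<lambda>x. \<lambda>i\<in>{e}. x) -` (Pair y -` G)"
    have B: "B \<in> sets borel" unfolding B_def using measurable_sets[OF embm A] by simp
    have rz: "(\<lambda>i\<in>{e}. X i x) = (\<lambda>i\<in>{e}. X e x)" for x by (auto simp: restrict_def fun_eq_iff)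
    have ZB: "Z -` (Pair y -` G) \<inter> space M = X e -` B \<inter> space M"
      unfolding B_def Z_def by (auto simp: rz)
    have "emeasure (distr M U Z) (Pair y -` G) = emeasure M (Z -` (Pair y -` G) \<inter> space M)"
      using rvZ A by (rule emeasure_distr)
    also have "\<dots> = emeasure M (X e -` B \<inter> space M)" using ZB by simp
    also have "\<dots> = (\<integral>\<^sup>+x. g x * indicator B x \<partial>lborel)"
      using dist B by (intro distributed_emeasure) auto
    also have "\<dots> \<le> (\<integral>\<^sup>+x. ennreal \<phi> * indicator B x \<partial>lborel)"
      using gb by (intro nn_integral_mono) (auto intro: mult_right_mono)
    also have "\<dots> = ennreal \<phi> * emeasure lborel B"
      using B by (intro nn_integral_cmult_indicator) auto
    also have "\<dots> \<le> ennreal \<phi> * ennreal L"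
    proof (intro mult_left_mono)
      show "emeasure lborel B \<le> ennreal L"
      proof (cases "B = {}")
        case True then show ?thesis by simp
      next
        case False
        then obtain x0 where x0: "x0 \<in> B" by auto
        have QB: "Q y x" if "x \<in> B" for x using that unfolding B_def G_def by auto
        have diamS: "x' - x \<le> L" if "x \<in> B" "x' \<in> B" for x x'
          using QB[OF that(1)] QB[OF that(2)] diam by blast
        have lb0: "x0 - L \<le> x" if "x \<in> B" for x using diamS[OF that x0] by linarith
        have bdd: "bdd_below B" unfolding bdd_below_def using lb0 by blast
        have "B \<subseteq> {Inf B .. Inf B + L}"
        proof
          fix x assume x: "x \<in> B"
          have i1: "Inf B \<le> x" using cInf_lower[OF x bdd] .
          have lb: "x - L \<le> z" if "z \<in> B" for z using diamS[OF that x] by linarith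
          have "x - L \<le> Inf B" using False lb by (intro cInf_greatest) auto
          with i1 show "x \<in> {Inf B .. Inf B + L}" by simp
        qed
        then have "emeasure lborel B \<le> emeasure lborel {Inf B .. Inf B + L}" by (intro emeasure_mono) auto
        also have "\<dots> = ennreal L" using L by simp
        finally show ?thesis .
      qed
    qed auto
    also have "\<dots> = ennreal (\<phi> * L)" using phi L by (simp add: ennreal_mult)
    finally show ?thesis .
  qed
  have "emeasure M {\<omega> \<in> space M. Q (Y \<omega>) (X e \<omega>)} = emeasure (distr M (T \<Otimes>\<^sub>M U) (\<lambda>x. (Y x, Z x))) G"
    using seteq meas G by (simp add: emeasure_distr)
  also have "\<dots> = emeasure (distr M T Y \<Otimes>\<^sub>M distr M U Z) G" using eq by simp
  also have "\<dots> = (\<integral>\<^sup>+y. emeasure (distr M U Z) (Pair y -` G) \<partial>distr M T Y)"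
    using G by (intro PZ.emeasure_pair_measure_alt) simp
  also have "\<dots> \<le> (\<integral>\<^sup>+y. ennreal (\<phi> * L) \<partial>distr M T Y)"
    using sec by (intro nn_integral_mono) auto
  also have "\<dots> = ennreal (\<phi> * L)" using PY.emeasure_space_1 by simp
  finally show "emeasure M {\<omega> \<in> space M. Q (restrict (\<lambda>i. X i \<omega>) (I - {e})) (X e \<omega>)} \<le> ennreal (\<phi> * L)"
    unfolding Y_def .
qed




definition Fp :: "(nat \<times> nat) set set \<Rightarrow> real \<Rightarrow> nat \<times> nat \<Rightarrow> (nat \<times> nat \<Rightarrow> real) \<Rightarrow> bool" where
  "Fp cyc t e r \<longleftrightarrow> (\<exists>C1\<in>cyc. e \<in> C1 \<and> (\<exists>C2\<in>cyc. e \<notin> C2 \<and> mean_weight r C2 \<le> mean_weight r C1 + t)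
      \<and> (\<forall>C\<in>cyc. mean_weight r C1 \<le> mean_weight r C))"

lemma Fp_cong:
  assumes "\<And>C. C \<in> cyc \<Longrightarrow> C \<subseteq> E" "\<And>x. x \<in> E \<Longrightarrow> r x = r' x"
  shows "Fp cyc t e r = Fp cyc t e r'"
proof -
  have "mean_weight r C = mean_weight r' C" if "C \<in> cyc" for C
    using assms that by (intro mean_cong) blast
  then show ?thesis unfolding Fp_def by (metis (no_types, lifting))
qed

lemma Fp_diam:
  assumes cyc: "\<And>C. C \<in> cyc \<Longrightarrow> finite C \<and> card C > 0 \<and> card C \<le> n" and t: "t \<ge> 0"
    and Hx: "Fp cyc t e (y(e:=x))" and Hx': "Fp cyc t e (y(e:=x'))"
  shows "x' - x \<le> t * real n"
proof (cases "x' \<le> x")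
  case True
  have "0 \<le> t * real n" using t by simp
  then show ?thesis using True by linarith
next
  case False
  obtain C1 C2 where C1: "C1 \<in> cyc" "e \<in> C1" and C2: "C2 \<in> cyc" "e \<notin> C2"
    and c2: "mean_weight (y(e:=x)) C2 \<le> mean_weight (y(e:=x)) C1 + t"
    and m1: "\<forall>C\<in>cyc. mean_weight (y(e:=x)) C1 \<le> mean_weight (y(e:=x)) C"
    using Hx unfolding Fp_def by blast
  obtain D1 where D1: "D1 \<in> cyc" "e \<in> D1"
    and m2: "\<forall>C\<in>cyc. mean_weight (y(e:=x')) D1 \<le> mean_weight (y(e:=x')) C"
    using Hx' unfolding Fp_def by blast
  have "mean_weight (y(e:=x')) D1 \<le> mean_weight (y(e:=x')) C2" using m2 C2 by blast
  also have "\<dots> = mean_weight (y(e:=x)) C2" using C2(2) by (rule mean_upd_notin)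
  also have "\<dots> \<le> mean_weight (y(e:=x)) C1 + t" by (rule c2)
  also have "\<dots> \<le> mean_weight (y(e:=x)) D1 + t" using m1 D1 by simp
  finally have "mean_weight (y(e:=x')) D1 - mean_weight (y(e:=x)) D1 \<le> t" by simp
  then have "(x' - x) / real (card D1) \<le> t" using mean_upd_diff[of D1 e y x' x] cyc[OF D1(1)] D1 by simp
  then have "x' - x \<le> t * real (card D1)" using cyc[OF D1(1)] by (simp add: divide_le_eq)
  also have "\<dots> \<le> t * real n" using cyc[OF D1(1)] t by (intro mult_left_mono) auto
  finally show ?thesis .
qed

lemma upd_meas[measurable]:
  "(\<lambda>p. ((fst p)(e := snd p)) a) \<in> borel_measurable (PiM (I - {e}) (\<lambda>_. borel) \<Otimes>\<^sub>M (borel :: real measure))"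
proof (cases "a = e")
  case True then show ?thesis by simp
next
  case False
  note F = this
  show ?thesis
  proof (cases "a \<in> I")
    case True
    with F show ?thesis by simp
  next
    case False
    have "(\<lambda>p. (\<lambda>_. undefined) p) \<in> borel_measurable (PiM (I - {e}) (\<lambda>_. borel) \<Otimes>\<^sub>M (borel :: real measure))"
      by simp
    moreover have "(\<lambda>p. ((fst p)(e := snd p)) a) = (\<lambda>p. fst p a)" using F by auto
    moreover have "fst p a = undefined" if "p \<in> space (PiM (I - {e}) (\<lambda>_. borel) \<Otimes>\<^sub>M (borel :: real measure))" for p
      using that False by (auto simp: space_pair_measure space_PiM PiE_def extensional_def)
    ultimately show ?thesis using measurable_cong by (smt (verit))
  qed
qed




theorem mainTheorem6:
  fixes n :: nat and E :: "(nat \<times> nat) set" and M :: "'w measure"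
    and X :: "nat \<times> nat \<Rightarrow> 'w \<Rightarrow> real" and f :: "nat \<times> nat \<Rightarrow> real \<Rightarrow> ennreal"
    and \<phi> :: real
  assumes "n \<ge> 1"
    and "E \<subseteq> {0..<n} \<times> {0..<n}"
    and "\<forall>i\<in>{0..<n}. \<exists>j. (i, j) \<in> E"
    and "\<forall>i\<in>{0..<n}. \<forall>j\<in>{0..<n}. (i, j) \<in> E\<^sup>*"
    and "prob_space M"
    and "prob_space.indep_vars M (\<lambda>_. borel) X E"
    and "\<forall>e\<in>E. distributed M lborel (X e) (f e)"
    and "\<phi> > 0"
    and "\<forall>e\<in>E. \<forall>y. f e y \<le> ennreal \<phi>"
  shows "measure M {\<omega> \<in> space M. \<exists>C. ball_inf E (\<lambda>e. X e \<omega>)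
            (1 / (3 * real n ^ 2 * real (card E) * \<phi>)) \<subseteq> unique_min_region E C}
         \<ge> 1 - 1 / real n"
proof -
  interpret prob_space M by fact
  note n1 = assms(1) and Esub = assms(2) and outE = assms(3) and ind = assms(6) and dist = assms(7)
    and phi = assms(8) and fb = assms(9)
  have finE: "finite E" using Esub by (rule finite_subset) auto
  define cyc where "cyc = {C. is_dcycle E C}"
  have cycE: "C \<subseteq> E" if "C \<in> cyc" for C using that dcycle_basic[OF _ Esub] unfolding cyc_def by blast
  have cycP: "finite C \<and> card C > 0 \<and> card C \<le> n" if "C \<in> cyc" for C
    using that dcycle_basic[OF _ Esub] unfolding cyc_def by (auto simp: card_gt_0_iff)
  have fincyc: "finite cyc" using cycE finE by (metis Pow_iff finite_Pow_iff finite_subset subsetI)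
  have cycne: "cyc \<noteq> {}" using dcycle_exists[OF n1 Esub outE] unfolding cyc_def by blast
  define m where "m = card E"
  have "(0::nat) \<in> {0..<n}" using n1 by simp
  then obtain j0 where "(0, j0) \<in> E" using outE by blast
  then have Ene: "E \<noteq> {}" by blast
  have mpos: "m > 0" unfolding m_def using finE Ene by (simp add: card_gt_0_iff)
  define d where "d = 1 / (3 * real n ^ 2 * real m * \<phi>)"
  have dpos: "d > 0" unfolding d_def using n1 mpos phi by simp
  define t where "t = 2 * d"
  have Xm: "X e \<in> borel_measurable M" if "e \<in> E" for e
    using dist that by (auto simp: distributed_def)
  define G where "G = {\<omega> \<in> space M. \<exists>C. ball_inf E (\<lambda>e. X e \<omega>) d \<subseteq> unique_min_region E C}"
  have Gchar: "G = {\<omega> \<in> space M. \<exists>C1\<in>cyc. \<forall>C2\<in>cyc. C2 \<noteq> C1 \<longrightarrow>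
       d * (\<Sum>e\<in>E. \<bar>coef C1 C2 e\<bar>) < (\<Sum>e\<in>E. coef C1 C2 e * X e \<omega>)}"
  proof -
    have cycE': "\<And>C. is_dcycle E C \<Longrightarrow> C \<subseteq> E" using cycE unfolding cyc_def by auto
    show ?thesis unfolding G_def cyc_def
      by (auto simp: ball_char[OF finE less_imp_le[OF dpos] cycE'])
  qed
  have sm: "(\<lambda>\<omega>. \<Sum>e\<in>E. coef a b e * X e \<omega>) \<in> borel_measurable M" for a b
    using Xm by (intro borel_measurable_sum borel_measurable_times) auto
  have Gm: "G \<in> events" unfolding Gchar using fincyc sm by measurable
  define F where "F e = {\<omega> \<in> space M. Fp cyc t e (\<lambda>e. X e \<omega>)}" for e
  have Feq: "F e = {\<omega> \<in> space M. (\<lambda>y x. Fp cyc t e (y(e := x))) (restrict (\<lambda>i. X i \<omega>) (E - {e})) (X e \<omega>)}"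
    if "e \<in> E" for e
    unfolding F_def using that by (intro Collect_cong conj_cong refl Fp_cong[OF cycE]) auto
  have Fb: "F e \<in> events \<and> emeasure M (F e) \<le> ennreal (\<phi> * (t * real n))" if e: "e \<in> E" for e
  proof -
    have Qm: "Measurable.pred (PiM (E - {e}) (\<lambda>_. borel) \<Otimes>\<^sub>M borel) (\<lambda>p. Fp cyc t e ((fst p)(e := snd p)))"
      unfolding Fp_def mean_weight_def using fincyc by measurable
    show ?thesis unfolding Feq[OF e]
      using prob_bound[OF ind e dist[rule_format, OF e] fb[rule_format, OF e] less_imp_le[OF phi], of "t * real n"
          "\<lambda>y x. Fp cyc t e (y(e := x))"] Qm Fp_diam[OF cycP] dpos
      unfolding t_def by auto
  qed
  have fail: "space M - G \<subseteq> (\<Union>e\<in>E. F e)"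
  proof
    fix \<omega> assume \<omega>: "\<omega> \<in> space M - G"
    define w where "w = (\<lambda>e. X e \<omega>)"
    have ng: "\<not> ball_inf E w d \<subseteq> unique_min_region E C" for C using \<omega> unfolding G_def w_def by auto
    define \<mu> where "\<mu> = Min (mean_weight w ` cyc)"
    have "\<mu> \<in> mean_weight w ` cyc" unfolding \<mu>_def using fincyc cycne by (intro Min_in) auto
    then obtain C1 where C1: "C1 \<in> cyc" "mean_weight w C1 = \<mu>" by blast
    have min1: "\<forall>C\<in>cyc. mean_weight w C1 \<le> mean_weight w C" unfolding C1(2) \<mu>_def using fincyc by auto
    obtain r' where r': "r' \<in> ball_inf E w d" "r' \<notin> unique_min_region E C1" using ng[of C1] by blast
    then obtain C2 where C2: "is_dcycle E C2" "C2 \<noteq> C1" "\<not> mean_weight r' C1 < mean_weight r' C2"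
      using C1(1) unfolding unique_min_region_def cyc_def by blast
    have C2c: "C2 \<in> cyc" using C2 unfolding cyc_def by simp
    have b1: "\<bar>mean_weight r' C1 - mean_weight w C1\<bar> \<le> d"
      using cycP[OF C1(1)] cycE[OF C1(1)] r'(1) by (intro mean_ball) auto
    have b2: "\<bar>mean_weight r' C2 - mean_weight w C2\<bar> \<le> d"
      using cycP[OF C2c] cycE[OF C2c] r'(1) by (intro mean_ball) auto
    have close: "mean_weight w C2 \<le> mean_weight w C1 + t" using b1 b2 C2(3) unfolding t_def by linarith
    have "\<not> C1 \<subseteq> C2" using dcycle_nonnest[of E C1 C2] C1(1) C2 unfolding cyc_def by auto
    then obtain e where e: "e \<in> C1" "e \<notin> C2" by blast
    have "e \<in> E" using e cycE[OF C1(1)] by blast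
    moreover have "Fp cyc t e w" unfolding Fp_def using C1(1) e C2c close min1 by blast
    ultimately show "\<omega> \<in> (\<Union>e\<in>E. F e)" using \<omega> unfolding F_def w_def by auto
  qed
  have Fev: "(\<Union>e\<in>E. F e) \<in> events" using Fb finE by auto
  have "prob (space M - G) \<le> prob (\<Union>e\<in>E. F e)" using fail Fev by (rule finite_measure_mono)
  also have "\<dots> \<le> (\<Sum>e\<in>E. prob (F e))" using Fb finE by (intro finite_measure_subadditive_finite) auto
  also have "\<dots> \<le> (\<Sum>e\<in>E. \<phi> * (t * real n))"
  proof (intro sum_mono)
    fix e assume "e \<in> E"
    then have "emeasure M (F e) \<le> ennreal (\<phi> * (t * real n))" using Fb by blast
    then show "prob (F e) \<le> \<phi> * (t * real n)" using phi dpos unfolding t_def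
      by (simp add: emeasure_eq_measure)
  qed
  also have "\<dots> = real m * \<phi> * (t * real n)" unfolding m_def by simp
  also have "\<dots> = 2 / (3 * real n)" unfolding t_def d_def using phi mpos n1 by (simp add: field_simps power2_eq_square)
  also have "\<dots> \<le> 1 / real n" using n1 by (simp add: divide_simps)
  finally have "prob (space M - G) \<le> 1 / real n" .
  moreover have "prob (space M - G) = 1 - prob G" using Gm by (rule prob_compl)
  ultimately have "prob G \<ge> 1 - 1 / real n" by simp
  then show ?thesis unfolding G_def d_def m_def .
qed


end
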